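(* Let $D_K$ be a relative $K$-entropy satisfying Properties (a) and (b) below. Then for all positive semidefinite operators $S,T,\tilde T$ on a common Hilbert space with $\tilde T\ge T$, $$D_K(S\|T)\ge D_K(S\|\tilde T).$$
   Context: All Hilbert spaces are finite-dimensional. A relative $K$-entropy $D_K$ assigns to every pair $(S,T)$ of positive semidefinite operators on a common Hilbert space an extended real number $D_K(S\|T)$. Properties: (a) for every trace-preserving completely positive map $\mathcal{E}$ (possibly between different spaces), $D_K(\mathcal{E}(S)\|\mathcal{E}(T))\le D_K(S\|T)$; (b) for positive semidefinite $S,T$ on $\mathcal{H}$ and $T'$ on $\mathcal{H}'$, $D_K(S\oplus 0\,\|\,T\oplus T')=D_K(S\|T)$ (operators on $\mathcal{H}\oplus\mathcal{H}'$). *)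

theory Defs
  imports "Jordan_Normal_Form.Matrix" "HOL-Library.Extended_Real"
begin

text \<open>Operators on an n-dimensional Hilbert space are represented by n x n complex matrices.\<close>

definition mtrace :: "complex mat \<Rightarrow> complex" where
  "mtrace A = (\<Sum>i<dim_row A. A $$ (i,i))"

definition psd :: "nat \<Rightarrow> complex mat \<Rightarrow> bool" where
  "psd n A \<longleftrightarrow> A \<in> carrier_mat n n \<and>
     (\<forall>v :: nat \<Rightarrow> complex.
        let q = (\<Sum>i<n. \<Sum>j<n. cnj (v i) * A $$ (i,j) * v j) in Im q = 0 \<and> Re q \<ge> 0)"

text \<open>Ampliation id_k tensor E of a map E from n x n to m x m matrices, acting blockwise
  on a k x k block matrix with n x n blocks.\<close>
definition ampl :: "nat \<Rightarrow> nat \<Rightarrow> nat \<Rightarrow> (complex mat \<Rightarrow> complex mat) \<Rightarrow> complex mat \<Rightarrow> complex mat" where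
  "ampl k n m E X = mat (k*m) (k*m) (\<lambda>(i,j).
     E (mat n n (\<lambda>(a,b). X $$ ((i div m)*n + a, (j div m)*n + b))) $$ (i mod m, j mod m))"

definition linear_map_mat :: "nat \<Rightarrow> nat \<Rightarrow> (complex mat \<Rightarrow> complex mat) \<Rightarrow> bool" where
  "linear_map_mat n m E \<longleftrightarrow>
     (\<forall>A \<in> carrier_mat n n. E A \<in> carrier_mat m m) \<and>
     (\<forall>A \<in> carrier_mat n n. \<forall>B \<in> carrier_mat n n. E (A + B) = E A + E B) \<and>
     (\<forall>A \<in> carrier_mat n n. \<forall>c. E (c \<cdot>\<^sub>m A) = c \<cdot>\<^sub>m E A)"

definition completely_positive :: "nat \<Rightarrow> nat \<Rightarrow> (complex mat \<Rightarrow> complex mat) \<Rightarrow> bool" where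
  "completely_positive n m E \<longleftrightarrow>
     (\<forall>k X. psd (k*n) X \<longrightarrow> psd (k*m) (ampl k n m E X))"

definition trace_preserving :: "nat \<Rightarrow> (complex mat \<Rightarrow> complex mat) \<Rightarrow> bool" where
  "trace_preserving n E \<longleftrightarrow> (\<forall>A \<in> carrier_mat n n. mtrace (E A) = mtrace A)"

definition cptp :: "nat \<Rightarrow> nat \<Rightarrow> (complex mat \<Rightarrow> complex mat) \<Rightarrow> bool" where
  "cptp n m E \<longleftrightarrow> linear_map_mat n m E \<and> completely_positive n m E \<and> trace_preserving n E"

definition prop_a :: "(complex mat \<Rightarrow> complex mat \<Rightarrow> ereal) \<Rightarrow> bool" where
  "prop_a D \<longleftrightarrow> (\<forall>n m E S T. cptp n m E \<longrightarrow> psd n S \<longrightarrow> psd n T \<longrightarrow> D (E S) (E T) \<le> D S T)"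

definition prop_b :: "(complex mat \<Rightarrow> complex mat \<Rightarrow> ereal) \<Rightarrow> bool" where
  "prop_b D \<longleftrightarrow> (\<forall>n n' S T T'. psd n S \<longrightarrow> psd n T \<longrightarrow> psd n' T' \<longrightarrow>
      D (four_block_mat S (0\<^sub>m n n') (0\<^sub>m n' n) (0\<^sub>m n' n'))
        (four_block_mat T (0\<^sub>m n n') (0\<^sub>m n' n) T') = D S T)"

end

theory Submission
  imports Defs
begin

lemma sum_split2: "(\<Sum>i<n+n. f i) = (\<Sum>i<n. f i) + (\<Sum>i<n. f (n+i::nat))"
proof -
  have "(\<Sum>i<n+n. f i) = (\<Sum>i\<in>{0..<n}. f i) + (\<Sum>i\<in>{n..<n+n}. f i)"
    by (simp add: lessThan_atLeast0 sum.atLeastLessThan_concat)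
  also have "(\<Sum>i\<in>{n..<n+n}. f i) = (\<Sum>i\<in>{0..<n}. f (n+i))"
    using sum.shift_bounds_nat_ivl[of f 0 n n] by (simp add: add.commute)
  finally show ?thesis by (simp add: lessThan_atLeast0)
qed

lemma psd_form: "psd n A \<Longrightarrow> Im (\<Sum>i<n. \<Sum>j<n. cnj (v i) * A $$ (i,j) * v j) = 0 \<and>
   Re (\<Sum>i<n. \<Sum>j<n. cnj (v i) * A $$ (i,j) * v j) \<ge> 0"
  unfolding psd_def Let_def by blast

lemma compress:
  assumes X: "psd M X" and inj: "inj_on g {..<N}" and rg: "g ` {..<N} \<subseteq> {..<M}"
  shows "Im (\<Sum>i<N. \<Sum>j<N. cnj (v i) * X $$ (g i, g j) * v j) = 0 \<and>
         Re (\<Sum>i<N. \<Sum>j<N. cnj (v i) * X $$ (g i, g j) * v j) \<ge> 0"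
proof -
  define G where "G = g ` {..<N}"
  define w where "w l = (if l \<in> G then v (the_inv_into {..<N} g l) else 0)" for l
  have wg: "w (g i) = v i" if "i < N" for i
    using that inj by (auto simp: w_def G_def the_inv_into_f_f)
  have fin: "finite {..<M}" by simp
  have GM: "G \<subseteq> {..<M}" using rg G_def by auto
  have inner: "(\<Sum>l'<M. cnj (w l) * X $$ (l,l') * w l') = (\<Sum>l'\<in>G. cnj (w l) * X $$ (l,l') * w l')" for l
    by (rule sum.mono_neutral_right) (use GM in \<open>auto simp: w_def\<close>)
  have "(\<Sum>l<M. \<Sum>l'<M. cnj (w l) * X $$ (l,l') * w l') = (\<Sum>l\<in>G. \<Sum>l'\<in>G. cnj (w l) * X $$ (l,l') * w l')"
    unfolding inner
    by (rule sum.mono_neutral_right) (use GM in \<open>auto simp: w_def\<close>)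
  also have "\<dots> = (\<Sum>i<N. \<Sum>j<N. cnj (v i) * X $$ (g i, g j) * v j)"
    unfolding G_def using inj
    by (simp add: sum.reindex wg)
  finally show ?thesis using psd_form[OF X, of w] by simp
qed

definition ptr :: "nat \<Rightarrow> complex mat \<Rightarrow> complex mat" where
  "ptr n X = mat n n (\<lambda>(i,j). X $$ (i,j) + X $$ (n+i, n+j))"

lemma ptr_linear: "linear_map_mat (2*n) n (ptr n)"
  unfolding linear_map_mat_def
proof (intro conjI ballI allI)
  fix A B :: "complex mat" assume A: "A \<in> carrier_mat (2*n) (2*n)" and B: "B \<in> carrier_mat (2*n) (2*n)"
  show "ptr n (A + B) = ptr n A + ptr n B"
  proof (rule eq_matI)
    fix i j assume ij: "i < dim_row (ptr n A + ptr n B)" "j < dim_col (ptr n A + ptr n B)"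
    then have "i < n" "j < n" by (simp_all add: ptr_def)
    then show "ptr n (A + B) $$ (i, j) = (ptr n A + ptr n B) $$ (i, j)"
      using A B by (simp add: ptr_def)
  qed (simp_all add: ptr_def)
next
  fix A :: "complex mat" and c assume A: "A \<in> carrier_mat (2*n) (2*n)"
  show "ptr n (c \<cdot>\<^sub>m A) = c \<cdot>\<^sub>m ptr n A"
  proof (rule eq_matI)
    fix i j assume ij: "i < dim_row (c \<cdot>\<^sub>m ptr n A)" "j < dim_col (c \<cdot>\<^sub>m ptr n A)"
    then have "i < n" "j < n" by (simp_all add: ptr_def)
    then show "ptr n (c \<cdot>\<^sub>m A) $$ (i, j) = (c \<cdot>\<^sub>m ptr n A) $$ (i, j)"
      using A by (simp add: ptr_def distrib_left)
  qed (simp_all add: ptr_def)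
qed (simp add: ptr_def)

lemma ptr_tp: "trace_preserving (2*n) (ptr n)"
  unfolding trace_preserving_def mtrace_def ptr_def
  by (auto simp: sum.distrib mult_2 sum_split2)

lemma g_props:
  fixes i k n :: nat
  assumes "i < k*n"
  shows "(i div n)*(2*n) + i mod n < k*(2*n)" "(i div n)*(2*n) + n + i mod n < k*(2*n)"
proof -
  have n: "n > 0" using assms by (cases n) auto
  have q: "i div n < k" using assms n by (simp add: div_less_iff_less_mult mult.commute)
  have r: "i mod n < n" using n by simp
  have "(i div n)*(2*n) + n + i mod n < (i div n)*(2*n) + 2*n" using r by simp
  also have "\<dots> = (Suc (i div n))*(2*n)" by simp
  also have "\<dots> \<le> k*(2*n)" using q by (intro mult_le_mono1) simp
  finally show "(i div n)*(2*n) + n + i mod n < k*(2*n)" .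
  then show "(i div n)*(2*n) + i mod n < k*(2*n)" by simp
qed

lemma g_inj:
  fixes a b c n :: nat
  assumes "(a div n)*(2*n) + c + a mod n = (b div n)*(2*n) + c + b mod n" "c \<le> n" "n > 0"
  shows "a = b"
proof -
  have key: "((i div n)*(2*n) + (c + i mod n)) div (2*n) = i div n \<and>
             ((i div n)*(2*n) + (c + i mod n)) mod (2*n) = c + i mod n" for i
  proof -
    have "i mod n < n" using assms(3) by simp
    then have lt: "c + i mod n < 2*n" using assms(2) by simp
    have "((i div n)*(2*n) + (c + i mod n)) div (2*n) = i div n + (c + i mod n) div (2*n)"
      using assms(3) by simp
    moreover have "((i div n)*(2*n) + (c + i mod n)) mod (2*n) = (c + i mod n) mod (2*n)"
      by simp
    ultimately show ?thesis using lt by simp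
  qed
  have "(a div n)*(2*n) + (c + a mod n) = (b div n)*(2*n) + (c + b mod n)"
    using assms(1) by (simp add: add.assoc)
  then have "a div n = b div n" "c + a mod n = c + b mod n" using key[of a] key[of b] by metis+
  then show ?thesis by (metis add_left_cancel div_mult_mod_eq)
qed

lemma ptr_cp: "completely_positive (2*n) n (ptr n)"
  unfolding completely_positive_def
proof (intro allI impI)
  fix k X assume X: "psd (k*(2*n)) X"
  define g0 where "g0 i = (i div n)*(2*n) + 0 + i mod n" for i
  define g1 where "g1 i = (i div n)*(2*n) + n + i mod n" for i
  have inj0: "inj_on g0 {..<k*n}"
  proof (rule inj_onI)
    fix a b assume ab: "a \<in> {..<k*n}" "b \<in> {..<k*n}" "g0 a = g0 b"
    then have np: "n > 0" by (cases n) auto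
    have "(a div n)*(2*n) + 0 + a mod n = (b div n)*(2*n) + 0 + b mod n"
      using ab(3) unfolding g0_def .
    then show "a = b" by (rule g_inj) (use np in auto)
  qed
  have inj1: "inj_on g1 {..<k*n}"
  proof (rule inj_onI)
    fix a b assume ab: "a \<in> {..<k*n}" "b \<in> {..<k*n}" "g1 a = g1 b"
    then have np: "n > 0" by (cases n) auto
    have "(a div n)*(2*n) + n + a mod n = (b div n)*(2*n) + n + b mod n"
      using ab(3) unfolding g1_def .
    then show "a = b" by (rule g_inj) (use np in auto)
  qed
  have rg0: "g0 ` {..<k*n} \<subseteq> {..<k*(2*n)}" using g_props(1) by (auto simp: g0_def)
  have rg1: "g1 ` {..<k*n} \<subseteq> {..<k*(2*n)}" using g_props(2) by (auto simp: g1_def)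
  have ent: "ampl k (2*n) n (ptr n) X $$ (i,j) = X $$ (g0 i, g0 j) + X $$ (g1 i, g1 j)"
    if "i < k*n" "j < k*n" for i j
  proof -
    have n: "n > 0" using that by (cases n) auto
    have b: "i mod n < n" "j mod n < n" using n by auto
    have b2: "i mod n < 2*n" "j mod n < 2*n" "n + i mod n < 2*n" "n + j mod n < 2*n" using b by linarith+
    have "ampl k (2*n) n (ptr n) X $$ (i,j) = ptr n (mat (2*n) (2*n) (\<lambda>(a,b). X $$ ((i div n)*(2*n) + a, (j div n)*(2*n) + b))) $$ (i mod n, j mod n)"
      unfolding ampl_def using that by simp
    also have "\<dots> = X $$ (g0 i, g0 j) + X $$ (g1 i, g1 j)"
      unfolding ptr_def g0_def g1_def using b
      by (simp add: add.assoc index_mat(1)[OF b2(1,2)] index_mat(1)[OF b2(3,4)])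
    finally show ?thesis .
  qed
  show "psd (k*n) (ampl k (2*n) n (ptr n) X)"
    unfolding psd_def Let_def
  proof (intro conjI allI)
    show "ampl k (2 * n) n (ptr n) X \<in> carrier_mat (k * n) (k * n)"
      by (simp add: ampl_def)
  next
    fix v :: "nat \<Rightarrow> complex"
    have "(\<Sum>i<k*n. \<Sum>j<k*n. cnj (v i) * ampl k (2*n) n (ptr n) X $$ (i,j) * v j)
      = (\<Sum>i<k*n. \<Sum>j<k*n. cnj (v i) * X $$ (g0 i, g0 j) * v j)
       + (\<Sum>i<k*n. \<Sum>j<k*n. cnj (v i) * X $$ (g1 i, g1 j) * v j)"
      unfolding sum.distrib[symmetric]
      by (intro sum.cong refl) (simp add: ent distrib_left distrib_right)
    then show "Im (\<Sum>i<k*n. \<Sum>j<k*n. cnj (v i) * ampl k (2*n) n (ptr n) X $$ (i,j) * v j) = 0"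
         "0 \<le> Re (\<Sum>i<k*n. \<Sum>j<k*n. cnj (v i) * ampl k (2*n) n (ptr n) X $$ (i,j) * v j)"
      using compress[OF X inj0 rg0, of v] compress[OF X inj1 rg1, of v] by simp_all
  qed
qed

lemma psd_sum_form: "psd n S \<Longrightarrow> psd n R \<Longrightarrow>
  Im ((\<Sum>i<n. \<Sum>j<n. cnj (v i) * S $$ (i,j) * v j) + (\<Sum>i<n. \<Sum>j<n. cnj (w i) * R $$ (i,j) * w j)) = 0 \<and>
  Re ((\<Sum>i<n. \<Sum>j<n. cnj (v i) * S $$ (i,j) * v j) + (\<Sum>i<n. \<Sum>j<n. cnj (w i) * R $$ (i,j) * w j)) \<ge> 0"
  using psd_form[of n S v] psd_form[of n R w] by simp

lemma psd_block:
  assumes S: "psd n S" and R: "psd n R"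
  shows "psd (2*n) (four_block_mat S (0\<^sub>m n n) (0\<^sub>m n n) R)"
  unfolding psd_def Let_def
proof (intro conjI allI)
  have c: "S \<in> carrier_mat n n" "R \<in> carrier_mat n n" using S R by (auto simp: psd_def)
  then show "four_block_mat S (0\<^sub>m n n) (0\<^sub>m n n) R \<in> carrier_mat (2*n) (2*n)"
    by (auto simp: mult_2)
  fix v :: "nat \<Rightarrow> complex"
  have "(\<Sum>i<2*n. \<Sum>j<2*n. cnj (v i) * four_block_mat S (0\<^sub>m n n) (0\<^sub>m n n) R $$ (i,j) * v j)
    = (\<Sum>i<n. \<Sum>j<n. cnj (v i) * S $$ (i,j) * v j) + (\<Sum>i<n. \<Sum>j<n. cnj (v (n+i)) * R $$ (i,j) * v (n+j))"
    using c by (simp add: mult_2 sum_split2 sum.distrib)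
  then show "Im (\<Sum>i<2*n. \<Sum>j<2*n. cnj (v i) * four_block_mat S (0\<^sub>m n n) (0\<^sub>m n n) R $$ (i,j) * v j) = 0"
    "0 \<le> Re (\<Sum>i<2*n. \<Sum>j<2*n. cnj (v i) * four_block_mat S (0\<^sub>m n n) (0\<^sub>m n n) R $$ (i,j) * v j)"
    using psd_sum_form[OF S R, of v "\<lambda>i. v (n+i)"] by simp_all
qed

lemma psd_zero: "psd n (0\<^sub>m n n)"
  unfolding psd_def by simp

theorem lemma5:
  fixes D :: "complex mat \<Rightarrow> complex mat \<Rightarrow> ereal"
    and n :: nat and S T T' :: "complex mat"
  assumes "prop_a D" and "prop_b D"
    and "psd n S" and "psd n T" and "psd n T'"
    and "psd n (T' - T)"
  shows "D S T \<ge> D S T'"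
proof -
  have c: "S \<in> carrier_mat n n" "T \<in> carrier_mat n n" "T' \<in> carrier_mat n n"
    using assms by (auto simp: psd_def)
  define A where "A = four_block_mat S (0\<^sub>m n n) (0\<^sub>m n n) (0\<^sub>m n n)"
  define B where "B = four_block_mat T (0\<^sub>m n n) (0\<^sub>m n n) (T' - T)"
  have "D A B = D S T"
    using assms(2) assms(3,4,6) unfolding prop_b_def A_def B_def by blast
  moreover have "D (ptr n A) (ptr n B) \<le> D A B"
    using assms(1) ptr_linear ptr_cp ptr_tp psd_block[OF assms(3) psd_zero] psd_block[OF assms(4,6)]
    unfolding prop_a_def cptp_def A_def B_def by blast
  moreover have "ptr n A = S" using c
    by (auto intro!: eq_matI simp: ptr_def A_def)
  moreover have "ptr n B = T'" using c
    by (auto intro!: eq_matI simp: ptr_def B_def)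
  ultimately show ?thesis by simp
qed

end
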